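(* Let $s,d_1,\ldots,d_n\ge0$ be real numbers and let $V_1,\ldots,V_n$ be vector subspaces of a finite-dimensional real vector space such that $$\sum_{i\in I}d_i+\dim\Big(\sum_{i\in I^c}V_i\Big)\ \ge\ s\qquad\text{for every } I\subset\{1,\ldots,n\}$$ (with $\sum_{i\in\emptyset}d_i=0$ and the empty sum of subspaces being $\{0\}$, of dimension $0$). For each $i$ fix a generating set $\{v^i_1,\ldots,v^i_{m_i}\}$ of $V_i$. Let $\mathbb J$ be the family of all tuples $J=(\mathrm j_1,\ldots,\mathrm j_n)$ with $\mathrm j_i\subset\{v^i_1,\ldots,v^i_{m_i}\}$ such that the family formed by all elements of $\mathrm j_1,\ldots,\mathrm j_n$ (taken together, as a family indexed by the pairs $(i,v)$ with $v\in\mathrm j_i$) is linearly independent and $\#\mathrm j_1+\cdots+\#\mathrm j_n\ge s$. For $J\in\mathbb J$ and $i\in\{1,\ldots,n\}$ put $$\widehat J(i):=(\#\mathrm j_1,\ldots,\#\mathrm j_n)+\big(s-(\#\mathrm j_1+\cdots+\#\mathrm j_n)\big)e_i\in\mathbb R^n,$$ where $e_1,\ldots,e_n$ is the canonical basis of $\mathbb R^n$, and let $\overline{\mathbb J}=\{(J,i)\in\mathbb J\times\{1,\ldots,n\}:\ \widehat J(i)\ge0\}$. Then there exist non-negative real numbers $(\alpha_{(J,i)})_{(J,i)\in\overline{\mathbb J}}$ with $\sum_{(J,i)\in\overline{\mathbb J}}\alpha_{(J,i)}=1$ such that $$\sum_{(J,i)\in\overline{\mathbb J}}\alpha_{(J,i)}\,\widehat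 J(i)\ \le\ (d_1,\ldots,d_n).$$
   Context: Inequalities between vectors of $\mathbb R^n$ ($\ge$, $\le$) are meant coordinatewise. $I^c=\{1,\ldots,n\}\setminus I$. *)

theory Defs
  imports "HOL-Analysis.Analysis"
begin

text \<open>Indices are 0..<n (standing for 1..n). A tuple J = (j_0,...,j_{n-1}) is a
function J :: nat => 'v set with J i a subset of the generating set G i for i < n
and J i = {} for i >= n (canonical representative).\<close>

definition tuple_pairs :: "nat \<Rightarrow> (nat \<Rightarrow> 'v set) \<Rightarrow> (nat \<times> 'v) set" where
  "tuple_pairs n J = Sigma {..<n} J"

text \<open>The family indexed by the pairs (i,v), v in J i, with value v is linearly
independent: it is injective and its image is an independent set.\<close>
definition family_independent :: "nat \<Rightarrow> (nat \<Rightarrow> 'v::real_vector set) \<Rightarrow> bool" where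
  "family_independent n J \<longleftrightarrow>
     inj_on snd (tuple_pairs n J) \<and> independent (snd ` tuple_pairs n J)"

definition JJ :: "nat \<Rightarrow> real \<Rightarrow> (nat \<Rightarrow> 'v::real_vector set) \<Rightarrow> (nat \<Rightarrow> 'v set) set" where
  "JJ n s G = {J. (\<forall>i<n. J i \<subseteq> G i) \<and> (\<forall>i\<ge>n. J i = {}) \<and>
                  family_independent n J \<and> (\<Sum>i<n. real (card (J i))) \<ge> s}"

definition Jhat :: "nat \<Rightarrow> real \<Rightarrow> (nat \<Rightarrow> 'v set) \<Rightarrow> nat \<Rightarrow> (nat \<Rightarrow> real)" where
  "Jhat n s J i = (\<lambda>k. real (card (J k)) +
       (if k = i then s - (\<Sum>l<n. real (card (J l))) else 0))"

definition JJbar :: "nat \<Rightarrow> real \<Rightarrow> (nat \<Rightarrow> 'v::real_vector set) \<Rightarrow> ((nat \<Rightarrow> 'v set) \<times> nat) set" where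
  "JJbar n s G = {(J, i). J \<in> JJ n s G \<and> i < n \<and> (\<forall>k<n. Jhat n s J i k \<ge> 0)}"

end

theory Submission
  imports Defs
begin


definition Conv :: "(nat \<Rightarrow> real) set \<Rightarrow> (nat \<Rightarrow> real) set" where
  "Conv P = {c. \<exists>u. (\<forall>p\<in>P. 0 \<le> u p) \<and> sum u P = 1 \<and> c = (\<lambda>k. \<Sum>p\<in>P. u p * p k)}"

lemma Conv_inc: assumes "finite P" "x \<in> P" shows "x \<in> Conv P"
proof -
  let ?u = "\<lambda>p. if p = x then 1 else (0::real)"
  have "sum ?u P = 1" using assms by (simp add: sum.delta)
  moreover have "x = (\<lambda>k. \<Sum>p\<in>P. ?u p * p k)"
  proof
    fix k
    have "(\<Sum>p\<in>P. ?u p * p k) = (\<Sum>p\<in>P. if p = x then x k else 0)" by (rule sum.cong) auto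
    then show "x k = (\<Sum>p\<in>P. ?u p * p k)" using assms by (simp add: sum.delta')
  qed
  ultimately show ?thesis unfolding Conv_def by (intro CollectI exI[of _ ?u]) auto
qed

lemma Conv_convex:
  assumes "x \<in> Conv P" "y \<in> Conv P" "0 \<le> a" "0 \<le> b" "a + b = 1"
  shows "(\<lambda>k. a * x k + b * y k) \<in> Conv P"
proof -
  obtain u where u: "\<forall>p\<in>P. 0 \<le> u p" "sum u P = 1" "x = (\<lambda>k. \<Sum>p\<in>P. u p * p k)"
    using assms(1) unfolding Conv_def by blast
  obtain v where v: "\<forall>p\<in>P. 0 \<le> v p" "sum v P = 1" "y = (\<lambda>k. \<Sum>p\<in>P. v p * p k)"
    using assms(2) unfolding Conv_def by blast
  let ?w = "\<lambda>p. a * u p + b * v p"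
  have "\<forall>p\<in>P. 0 \<le> ?w p" using u v assms by simp
  moreover have "sum ?w P = 1" using u v assms by (simp add: sum.distrib sum_distrib_left[symmetric])
  moreover have "(\<lambda>k. a * x k + b * y k) = (\<lambda>k. \<Sum>p\<in>P. ?w p * p k)"
    using u v by (simp add: sum.distrib sum_distrib_left algebra_simps)
  ultimately show ?thesis unfolding Conv_def by (intro CollectI exI[of _ ?w]) (simp only: conj_assoc)
qed

lemma Conv_trans:
  assumes fin: "finite P" "finite P'" and sub: "P' \<subseteq> Conv P" and c: "c \<in> Conv P'"
  shows "c \<in> Conv P"
proof -
  obtain u where u: "\<forall>p\<in>P'. 0 \<le> u p" "sum u P' = 1" "c = (\<lambda>k. \<Sum>p\<in>P'. u p * p k)"
    using c unfolding Conv_def by blast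
  have "\<forall>p'\<in>P'. \<exists>v. (\<forall>p\<in>P. 0 \<le> v p) \<and> sum v P = 1 \<and> p' = (\<lambda>k. \<Sum>p\<in>P. v p * p k)"
    using sub unfolding Conv_def by blast
  then obtain v where v: "\<And>p'. p' \<in> P' \<Longrightarrow> (\<forall>p\<in>P. 0 \<le> v p' p) \<and> sum (v p') P = 1 \<and> p' = (\<lambda>k. \<Sum>p\<in>P. v p' p * p k)"
    by metis
  let ?w = "\<lambda>p. \<Sum>p'\<in>P'. u p' * v p' p"
  have "\<forall>p\<in>P. 0 \<le> ?w p" using u v by (simp add: sum_nonneg)
  moreover have "sum ?w P = 1"
  proof -
    have "sum ?w P = (\<Sum>p'\<in>P'. u p' * sum (v p') P)"
      by (subst sum.swap) (simp add: sum_distrib_left)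
    also have "\<dots> = (\<Sum>p'\<in>P'. u p')" using v by simp
    finally show ?thesis using u by simp
  qed
  moreover have "c = (\<lambda>k. \<Sum>p\<in>P. ?w p * p k)"
  proof
    fix k
    have eq: "p' k = (\<Sum>p\<in>P. v p' p * p k)" if "p' \<in> P'" for p'
    proof -
      from v[OF that] have "p' = (\<lambda>k. \<Sum>p\<in>P. v p' p * p k)" by blast
      then have "p' k = (\<lambda>k. \<Sum>p\<in>P. v p' p * p k) k" by (rule arg_cong[where f = "\<lambda>f. f k"])
      then show ?thesis by simp
    qed
    have "c k = (\<Sum>p'\<in>P'. u p' * p' k)" using u(3) by simp
    also have "\<dots> = (\<Sum>p'\<in>P'. u p' * (\<Sum>p\<in>P. v p' p * p k))"
      by (rule sum.cong) (simp_all add: eq)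
    also have "\<dots> = (\<Sum>p\<in>P. ?w p * p k)"
      by (simp add: sum_distrib_left sum_distrib_right mult.assoc) (subst sum.swap, rule refl)
    finally show "c k = (\<Sum>p\<in>P. ?w p * p k)" .
  qed
  ultimately show ?thesis unfolding Conv_def by (intro CollectI exI[of _ ?w]) (simp only: conj_assoc)
qed

lemma Conv_coord_le:
  assumes "c \<in> Conv P" "\<forall>p\<in>P. p m \<le> 0" shows "c m \<le> 0"
proof -
  obtain u where u: "\<forall>p\<in>P. 0 \<le> u p" "c = (\<lambda>k. \<Sum>p\<in>P. u p * p k)"
    using assms(1) unfolding Conv_def by blast
  have "c m = (\<Sum>p\<in>P. u p * p m)" using u by simp
  also have "\<dots> \<le> 0" using u assms(2) by (intro sum_nonpos) (simp add: mult_nonneg_nonpos)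
  finally show ?thesis .
qed

lemma comb_div: "(D::real) \<noteq> 0 \<Longrightarrow> (a/D)*x + (-b/D)*y = (a*x - b*y)/D"
  by (simp add: field_simps)

lemma farkas:
  assumes "finite P" "\<forall>w. (\<forall>k<n. 0 \<le> w k) \<longrightarrow> (\<exists>p\<in>P. (\<Sum>k<n. w k * p k) \<le> 0)"
  shows "\<exists>c\<in>Conv P. \<forall>k<n. c k \<le> 0"
  using assms
proof (induction n arbitrary: P)
  case 0
  then obtain p where "p \<in> P" by blast
  then show ?case using Conv_inc[OF "0.prems"(1)] by blast
next
  case (Suc n)
  note finP = Suc.prems(1)
  define Pm where "Pm = {p\<in>P. p n \<le> 0}"
  define Pn where "Pn = {p\<in>P. p n < 0}"
  define Pp where "Pp = {p\<in>P. 0 < p n}"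
  define mix where "mix p q = (\<lambda>k. (q n / (q n - p n)) * p k + (- p n / (q n - p n)) * q k)" for p q :: "nat \<Rightarrow> real"
  define P' where "P' = Pm \<union> (\<lambda>(p,q). mix p q) ` (Pn \<times> Pp)"
  have finPn: "finite Pn" and finPp: "finite Pp" and finPm: "finite Pm"
    using finP by (auto simp: Pn_def Pp_def Pm_def)
  have finP': "finite P'" unfolding P'_def using finPn finPp finPm by auto
  have mixcoef: "0 \<le> q n / (q n - p n)" "0 \<le> - p n / (q n - p n)"
      "q n / (q n - p n) + - p n / (q n - p n) = 1"
    if "p \<in> Pn" "q \<in> Pp" for p q
  proof -
    have D: "q n - p n > 0" using that by (auto simp: Pn_def Pp_def)
    show "0 \<le> q n / (q n - p n)"
      by (rule divide_nonneg_pos) (use that D in \<open>auto simp: Pp_def\<close>)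
    show "0 \<le> - p n / (q n - p n)"
      by (rule divide_nonneg_pos) (use that D in \<open>auto simp: Pn_def\<close>)
    have "q n / (q n - p n) + - p n / (q n - p n) = (q n + - p n) / (q n - p n)"
      by (rule add_divide_distrib[symmetric])
    also have "\<dots> = 1" using D by simp
    finally show "q n / (q n - p n) + - p n / (q n - p n) = 1" .
  qed
  have sub: "P' \<subseteq> Conv P"
  proof
    fix x assume "x \<in> P'"
    then consider "x \<in> Pm" | p q where "p \<in> Pn" "q \<in> Pp" "x = mix p q"
      unfolding P'_def by auto
    then show "x \<in> Conv P"
    proof cases
      case 1 then show ?thesis using Conv_inc[OF finP] by (auto simp: Pm_def)
    next
      case 2
      have "p \<in> P" "q \<in> P" using 2 by (auto simp: Pn_def Pp_def)
      then show ?thesis unfolding 2(3) mix_def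
        by (intro Conv_convex Conv_inc[OF finP] mixcoef[OF 2(1,2)])
    qed
  qed
  have coord: "\<forall>p'\<in>P'. p' n \<le> 0"
  proof
    fix x assume "x \<in> P'"
    then consider "x \<in> Pm" | p q where "p \<in> Pn" "q \<in> Pp" "x = mix p q"
      unfolding P'_def by auto
    then show "x n \<le> 0"
    proof cases
      case 1 then show ?thesis by (auto simp: Pm_def)
    next
      case 2
      have D: "q n - p n > 0" using 2 by (auto simp: Pn_def Pp_def)
      have "x n = (q n * p n + - p n * q n) / (q n - p n)"
        unfolding 2(3) mix_def using D by (simp add: field_simps)
      also have "\<dots> = 0" by simp
      finally show ?thesis by simp
    qed
  qed
  have hyp': "\<forall>w. (\<forall>k<n. 0 \<le> w k) \<longrightarrow> (\<exists>p\<in>P'. (\<Sum>k<n. w k * p k) \<le> 0)"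
  proof (intro allI impI, rule ccontr)
    fix w :: "nat \<Rightarrow> real"
    assume w: "\<forall>k<n. 0 \<le> w k" and neg: "\<not> (\<exists>p\<in>P'. (\<Sum>k<n. w k * p k) \<le> 0)"
    define X where "X p = (\<Sum>k<n. w k * p k)" for p :: "nat \<Rightarrow> real"
    have Xpos: "X p > 0" if "p \<in> P'" for p using neg that by (auto simp: X_def not_le)
    have XPm: "X p > 0" if "p \<in> P" "p n \<le> 0" for p
      using Xpos[of p] that by (auto simp: P'_def Pm_def)
    have Xmix: "p n * X q < q n * X p" if pq: "p \<in> Pn" "q \<in> Pp" for p q
    proof -
      have D: "q n - p n > 0" using pq by (auto simp: Pn_def Pp_def)
      define a where "a = q n / (q n - p n)"
      define b where "b = - p n / (q n - p n)"
      have "X (mix p q) = (\<Sum>k<n. w k * (a * p k + b * q k))"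
        unfolding X_def mix_def a_def b_def by simp
      also have "\<dots> = a * X p + b * X q"
        unfolding X_def by (simp add: sum.distrib sum_distrib_left algebra_simps)
      finally have "X (mix p q) = (q n / (q n - p n)) * X p + (- p n / (q n - p n)) * X q"
        unfolding a_def b_def .
      also have "\<dots> = (q n * X p - p n * X q) / (q n - p n)"
        using D by (intro comb_div) simp
      finally have "0 < (q n * X p - p n * X q) / (q n - p n)"
        using Xpos[of "mix p q"] pq by (auto simp: P'_def)
      then have "0 < q n * X p - p n * X q" using D by (simp add: zero_less_divide_iff)
      then show ?thesis by simp
    qed
    define L where "L = Max (insert 0 ((\<lambda>q. - X q / q n) ` Pp))"
    have finL: "finite (insert 0 ((\<lambda>q. - X q / q n) ` Pp))" using finPp by simp
    have L0: "0 \<le> L" and Lq: "\<And>q. q \<in> Pp \<Longrightarrow> - X q / q n \<le> L"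
      unfolding L_def using finL by (auto intro: Max_ge)
    have Lin: "L \<in> insert 0 ((\<lambda>q. - X q / q n) ` Pp)" unfolding L_def using finL by (intro Max_in) auto
    obtain t where t0: "0 \<le> t" and tn: "\<And>p. p \<in> Pn \<Longrightarrow> X p / (- p n) > t"
       and tp: "\<And>q. q \<in> Pp \<Longrightarrow> - X q / q n < t"
    proof (cases "Pn = {}")
      case True
      show ?thesis
      proof (rule that[of "L + 1"])
        fix q assume "q \<in> Pp" then have "- X q / q n \<le> L" by (rule Lq)
        then show "- X q / q n < L + 1" by linarith
      qed (use L0 True in auto)
    next
      case False
      define U where "U = Min ((\<lambda>p. X p / (- p n)) ` Pn)"
      have Up: "\<And>p. p \<in> Pn \<Longrightarrow> U \<le> X p / (- p n)" unfolding U_def using finPn by auto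
      have Uin: "U \<in> (\<lambda>p. X p / (- p n)) ` Pn" unfolding U_def using finPn False by (intro Min_in) auto
      then obtain p0 where p0: "p0 \<in> Pn" "U = X p0 / (- p0 n)" by auto
      have p0n: "- p0 n > 0" using p0 by (auto simp: Pn_def)
      have "L < U"
      proof -
        have Xp0: "X p0 > 0" using XPm[of p0] p0 by (auto simp: Pn_def)
        from Lin consider "L = 0" | q where "q \<in> Pp" "L = - X q / q n" by auto
        then show ?thesis
        proof cases
          case 1
          have "0 < X p0 / (- p0 n)" by (rule divide_pos_pos[OF Xp0 p0n])
          then show ?thesis using 1 p0 by simp
        next
          case 2
          have qn: "q n > 0" using 2 by (auto simp: Pp_def)
          have "p0 n * X q < q n * X p0" using Xmix[OF p0(1) 2(1)] .
          then have "- X q * (- p0 n) < X p0 * q n" by (simp add: algebra_simps)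
          then have "- X q / q n < X p0 / (- p0 n)" using qn p0n by (simp add: divide_less_eq less_divide_eq field_simps)
          then show ?thesis using 2 p0 by simp
        qed
      qed
      show ?thesis
      proof (rule that[of "(L + U) / 2"])
        show "0 \<le> (L + U) / 2" using L0 \<open>L < U\<close> by simp
        fix p assume "p \<in> Pn" then have "U \<le> X p / (- p n)" by (rule Up)
        moreover have "(L + U) / 2 < U" using \<open>L < U\<close> by simp
        ultimately show "(L + U) / 2 < X p / (- p n)" by (rule less_le_trans[rotated])
      next
        fix q assume "q \<in> Pp" then have "- X q / q n \<le> L" by (rule Lq)
        moreover have "L < (L + U) / 2" using \<open>L < U\<close> by simp
        ultimately show "- X q / q n < (L + U) / 2" by (rule le_less_trans)
      qed
    qed
    define w' where "w' = w(n := t)"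
    have "\<forall>k<Suc n. 0 \<le> w' k" using w t0 by (auto simp: w'_def less_Suc_eq)
    then obtain p where p: "p \<in> P" "(\<Sum>k<Suc n. w' k * p k) \<le> 0" using Suc.prems(2) by blast
    have "(\<Sum>k<Suc n. w' k * p k) = X p + t * p n"
      by (simp add: w'_def X_def)
    with p have le: "X p + t * p n \<le> 0" by simp
    consider "p n = 0" | "p n < 0" | "p n > 0" by linarith
    then show False
    proof cases
      case 1 then show ?thesis using XPm[of p] p le by simp
    next
      case 2
      have "t < X p / (- p n)" using tn[of p] 2 p by (auto simp: Pn_def)
      moreover have c: "0 < - p n" using 2 by simp
      ultimately have "t * (- p n) < X p" by (simp only: pos_less_divide_eq[OF c])
      then show ?thesis using le by (simp add: algebra_simps)
    next
      case 3
      have "- X p / p n < t" using tp[of p] 3 p by (auto simp: Pp_def)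
      then have "- X p < t * p n" by (simp only: pos_divide_less_eq[OF 3])
      then show ?thesis using le by (simp add: algebra_simps)
    qed
  qed
  from Suc.IH[OF finP' hyp'] obtain c where c: "c \<in> Conv P'" "\<forall>k<n. c k \<le> 0" by blast
  have "c n \<le> 0" using Conv_coord_le[OF c(1) coord] .
  moreover have "c \<in> Conv P" using Conv_trans[OF finP finP' sub c(1)] .
  ultimately show ?case using c(2) by (auto simp: less_Suc_eq)
qed



fun chainB :: "(nat \<Rightarrow> 'v::real_vector set) \<Rightarrow> (nat \<Rightarrow> nat) \<Rightarrow> nat \<Rightarrow> 'v set" where
  "chainB G \<sigma> 0 = {}"
| "chainB G \<sigma> (Suc j) = (SOME B. chainB G \<sigma> j \<subseteq> B \<and> B \<subseteq> chainB G \<sigma> j \<union> G (\<sigma> j) \<and>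
      independent B \<and> chainB G \<sigma> j \<union> G (\<sigma> j) \<subseteq> span B)"

lemma chainB_step:
  assumes "independent (chainB G \<sigma> j)"
  shows "chainB G \<sigma> j \<subseteq> chainB G \<sigma> (Suc j) \<and> chainB G \<sigma> (Suc j) \<subseteq> chainB G \<sigma> j \<union> G (\<sigma> j) \<and>
      independent (chainB G \<sigma> (Suc j)) \<and> chainB G \<sigma> j \<union> G (\<sigma> j) \<subseteq> span (chainB G \<sigma> (Suc j))"
proof -
  have "\<exists>B. chainB G \<sigma> j \<subseteq> B \<and> B \<subseteq> chainB G \<sigma> j \<union> G (\<sigma> j) \<and> independent B \<and>
      chainB G \<sigma> j \<union> G (\<sigma> j) \<subseteq> span B"
  proof -
    obtain B where "chainB G \<sigma> j \<subseteq> B" "B \<subseteq> chainB G \<sigma> j \<union> G (\<sigma> j)" "independent B"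
      "chainB G \<sigma> j \<union> G (\<sigma> j) \<subseteq> span B"
      by (rule maximal_independent_subset_extend[of "chainB G \<sigma> j" "chainB G \<sigma> j \<union> G (\<sigma> j)"])
        (use assms in auto)
    then show ?thesis by blast
  qed
  then show ?thesis unfolding chainB.simps(2) by (rule someI_ex)
qed

lemma chainB_props:
  "independent (chainB G \<sigma> j) \<and> chainB G \<sigma> j \<subseteq> (\<Union>l<j. G (\<sigma> l)) \<and>
   (\<Union>l<j. G (\<sigma> l)) \<subseteq> span (chainB G \<sigma> j)"
proof (induction j)
  case 0 then show ?case by (simp add: independent_empty)
next
  case (Suc j)
  note st = chainB_step[OF Suc.IH[THEN conjunct1]]
  note IH1 = Suc.IH[THEN conjunct2, THEN conjunct1] and IH2 = Suc.IH[THEN conjunct2, THEN conjunct2]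
  note s1 = st[THEN conjunct1] and s2 = st[THEN conjunct2, THEN conjunct1]
    and s3 = st[THEN conjunct2, THEN conjunct2, THEN conjunct1]
    and s4 = st[THEN conjunct2, THEN conjunct2, THEN conjunct2]
  have sp: "span (chainB G \<sigma> j) \<subseteq> span (chainB G \<sigma> (Suc j))" using s1 by (rule span_mono)
  have U: "(\<Union>l<Suc j. G (\<sigma> l)) = (\<Union>l<j. G (\<sigma> l)) \<union> G (\<sigma> j)"
    by (simp add: lessThan_Suc Un_commute)
  have i2: "chainB G \<sigma> (Suc j) \<subseteq> (\<Union>l<j. G (\<sigma> l)) \<union> G (\<sigma> j)"
    using s2 IH1 by (meson Un_mono order_trans order_refl)
  have a1: "(\<Union>l<j. G (\<sigma> l)) \<subseteq> span (chainB G \<sigma> (Suc j))" using IH2 sp by (rule order_trans)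
  have a2: "G (\<sigma> j) \<subseteq> span (chainB G \<sigma> (Suc j))" using s4 by (rule le_supE)
  have i3: "(\<Union>l<j. G (\<sigma> l)) \<union> G (\<sigma> j) \<subseteq> span (chainB G \<sigma> (Suc j))"
    using a1 a2 by (rule Un_least)
  show ?case unfolding U using s3 i2 i3 by (intro conjI)
qed

lemma abel:
  fixes a u :: "nat \<Rightarrow> real"
  assumes a0: "\<forall>j<n. 0 \<le> a j" and amono: "\<forall>i j. i \<le> j \<longrightarrow> j < n \<longrightarrow> a i \<le> a j"
    and tails: "\<forall>j\<le>n. (\<Sum>l\<in>{j..<n}. u l) \<le> 0"
  shows "(\<Sum>j<n. a j * u j) \<le> 0"
proof -
  have P: "(\<Sum>l\<in>{j..<n}. a l * u l) \<le> a j * (\<Sum>l\<in>{j..<n}. u l)" if "j \<le> n" for j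
    using that
  proof (induction j rule: inc_induct)
    case base then show ?case by simp
  next
    case (step j)
    have split1: "{j..<n} = insert j {Suc j..<n}" using step.hyps by auto
    have T: "(\<Sum>l\<in>{Suc j..<n}. u l) \<le> 0" using tails[rule_format, of "Suc j"] step.hyps by simp
    have "a (Suc j) * (\<Sum>l\<in>{Suc j..<n}. u l) \<le> a j * (\<Sum>l\<in>{Suc j..<n}. u l)"
    proof (cases "Suc j < n")
      case True
      then have "a j \<le> a (Suc j)" using amono[rule_format, of j "Suc j"] by simp
      then show ?thesis using T by (simp add: mult_right_mono_neg)
    next
      case False
      then have "{Suc j..<n} = {}" by auto
      then show ?thesis by simp
    qed
    with step.IH have S: "(\<Sum>l\<in>{Suc j..<n}. a l * u l) \<le> a j * (\<Sum>l\<in>{Suc j..<n}. u l)"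
      by (rule order_trans)
    have "(\<Sum>l\<in>{j..<n}. a l * u l) = a j * u j + (\<Sum>l\<in>{Suc j..<n}. a l * u l)"
      unfolding split1 by (subst sum.insert) auto
    also have "\<dots> \<le> a j * u j + a j * (\<Sum>l\<in>{Suc j..<n}. u l)" using S by simp
    also have "\<dots> = a j * (\<Sum>l\<in>{j..<n}. u l)"
      unfolding split1 by (subst sum.insert) (auto simp: distrib_left)
    finally show ?case .
  qed
  have "(\<Sum>j<n. a j * u j) = (\<Sum>l\<in>{0..<n}. a l * u l)" by (simp add: atLeast0LessThan)
  also have "\<dots> \<le> a 0 * (\<Sum>l\<in>{0..<n}. u l)" using P[of 0] by simp
  also have "\<dots> \<le> 0"
  proof (cases "n = 0")
    case True then show ?thesis by simp
  next
    case False
    then have "0 \<le> a 0" using a0 by simp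
    moreover have "(\<Sum>l\<in>{0..<n}. u l) \<le> 0" using tails by simp
    ultimately show ?thesis by (rule mult_nonneg_nonpos)
  qed
  finally show ?thesis .
qed

lemma in_chain_diff:
  assumes "v \<in> chainB G \<sigma> m"
  shows "\<exists>j<m. v \<in> chainB G \<sigma> (Suc j) - chainB G \<sigma> j"
  using assms
proof (induction m)
  case 0 then show ?case by simp
next
  case (Suc m)
  show ?case
  proof (cases "v \<in> chainB G \<sigma> m")
    case True
    then obtain j where "j < m" "v \<in> chainB G \<sigma> (Suc j) - chainB G \<sigma> j" using Suc.IH by blast
    then show ?thesis by (intro exI[of _ j]) simp
  next
    case False
    then show ?thesis using Suc.prems by (intro exI[of _ m]) simp
  qed
qed

lemma chainB_mono:
  fixes G :: "nat \<Rightarrow> 'v::real_vector set"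
  assumes "a \<le> b" shows "chainB G \<sigma> a \<subseteq> chainB G \<sigma> b"
proof -
  have "\<And>j. chainB G \<sigma> j \<subseteq> chainB G \<sigma> (Suc j)"
    using chainB_step[OF chainB_props[THEN conjunct1]] by blast
  then show ?thesis using assms by (rule lift_Suc_mono_le)
qed

lemma greedy:
  fixes n :: nat and s :: real and d w :: "nat \<Rightarrow> real"
    and V G :: "nat \<Rightarrow> 'v::euclidean_space set"
  assumes n_pos: "n \<ge> 1"
    and s_nonneg: "s \<ge> 0"
    and d_nonneg: "\<forall>i<n. d i \<ge> 0"
    and gen_fin: "\<forall>i<n. finite (G i)"
    and gen_span: "\<forall>i<n. span (G i) = V i"
    and hyp: "\<forall>I. I \<subseteq> {..<n} \<longrightarrow>
               (\<Sum>i\<in>I. d i) + real (dim (span (\<Union>i\<in>{..<n} - I. V i))) \<ge> s"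
    and w: "\<forall>k<n. 0 \<le> w k"
  shows "\<exists>p\<in>JJbar n s G. (\<Sum>k<n. w k * (Jhat n s (fst p) (snd p) k - d k)) \<le> 0"
proof -
  define xs where "xs = sort_key w [0..<n]"
  define \<sigma> where "\<sigma> j = xs ! j" for j
  have len: "length xs = n" unfolding xs_def by simp
  have dist: "distinct xs" unfolding xs_def by simp
  have setxs: "set xs = {..<n}" unfolding xs_def by auto
  have sorted: "sorted (map w xs)" unfolding xs_def by (rule sorted_sort_key)
  have \<sigma>_bij: "bij_betw \<sigma> {..<n} {..<n}"
    unfolding \<sigma>_def using bij_betw_nth[OF dist _ refl] len setxs by (simp add: fun_eq_iff)
  then have \<sigma>_inj: "inj_on \<sigma> {..<n}" and \<sigma>_img: "\<sigma> ` {..<n} = {..<n}"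
    by (auto simp: bij_betw_def)
  have \<sigma>_lt: "\<sigma> j < n" if "j < n" for j using \<sigma>_img that by auto
  have \<sigma>_mono: "w (\<sigma> i) \<le> w (\<sigma> j)" if "i \<le> j" "j < n" for i j
  proof -
    have "(map w xs) ! i \<le> (map w xs) ! j"
      using sorted that len by (simp add: sorted_iff_nth_mono)
    then show ?thesis using that len by (simp add: \<sigma>_def)
  qed
  define B where "B = chainB G \<sigma>"
  have Bind: "independent (B j)" for j unfolding B_def using chainB_props by blast
  have Bsub: "B j \<subseteq> (\<Union>l<j. G (\<sigma> l))" for j unfolding B_def using chainB_props by blast
  have Bspan: "(\<Union>l<j. G (\<sigma> l)) \<subseteq> span (B j)" for j unfolding B_def using chainB_props by blast
  have Bfin: "finite (B j)" for j using Bind by (rule finiteI_independent)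
  have Bmono: "B a \<subseteq> B b" if "a \<le> b" for a b unfolding B_def using that by (rule chainB_mono)
  have Bstep: "B (Suc j) \<subseteq> B j \<union> G (\<sigma> j)" for j
    unfolding B_def using chainB_step[OF chainB_props[THEN conjunct1]] by blast
  define c where "c j = real (card (B j))" for j
  have cmono: "c a \<le> c b" if "a \<le> b" for a b
    unfolding c_def using card_mono[OF Bfin Bmono[OF that]] by simp
  have c0: "c 0 = 0" by (simp add: c_def B_def)
  have dimB: "dim (span (\<Union>l<j. V (\<sigma> l))) = card (B j)" if "j \<le> n" for j
  proof -
    have VG: "(\<Union>l<j. V (\<sigma> l)) = (\<Union>l<j. span (G (\<sigma> l)))"
      by (rule SUP_cong) (use gen_span \<sigma>_lt that in auto)
    have "span (\<Union>l<j. span (G (\<sigma> l))) = span (\<Union>l<j. G (\<sigma> l))"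
    proof
      have "(\<Union>l<j. span (G (\<sigma> l))) \<subseteq> span (\<Union>l<j. G (\<sigma> l))"
        by (intro UN_least span_mono) auto
      then show "span (\<Union>l<j. span (G (\<sigma> l))) \<subseteq> span (\<Union>l<j. G (\<sigma> l))"
        by (metis span_mono span_span)
      have "(\<Union>l<j. G (\<sigma> l)) \<subseteq> (\<Union>l<j. span (G (\<sigma> l)))"
        by (intro UN_mono span_superset) auto
      then show "span (\<Union>l<j. G (\<sigma> l)) \<subseteq> span (\<Union>l<j. span (G (\<sigma> l)))"
        by (rule span_mono)
    qed
    also have "span (\<Union>l<j. G (\<sigma> l)) = span (B j)"
    proof
      show "span (\<Union>l<j. G (\<sigma> l)) \<subseteq> span (B j)" using Bspan by (metis span_mono span_span)
      show "span (B j) \<subseteq> span (\<Union>l<j. G (\<sigma> l))" using Bsub by (rule span_mono)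
    qed
    finally have "span (\<Union>l<j. V (\<sigma> l)) = span (B j)" unfolding VG .
    then show ?thesis using dim_span_eq_card_independent[OF Bind] by simp
  qed
  have hypj: "s \<le> (\<Sum>l\<in>{j..<n}. d (\<sigma> l)) + c j" if "j \<le> n" for j
  proof -
    have I: "\<sigma> ` {j..<n} \<subseteq> {..<n}" using \<sigma>_lt by auto
    have inj2: "inj_on \<sigma> {j..<n}" using \<sigma>_inj by (rule inj_on_subset) auto
    have compl: "{..<n} - \<sigma> ` {j..<n} = \<sigma> ` {..<j}"
    proof -
      have "{..<n} = \<sigma> ` {..<j} \<union> \<sigma> ` {j..<n}" using \<sigma>_img that
        by (metis image_Un ivl_disj_un_one(2) zero_le atLeast0LessThan)
      moreover have "\<sigma> ` {..<j} \<inter> \<sigma> ` {j..<n} = {}"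
      proof -
        have ab: "a = b" if "a < j" "j \<le> b" "b < n" "\<sigma> a = \<sigma> b" for a b
        proof -
          have "a < n" using that by linarith
          then show ?thesis using \<sigma>_inj[unfolded inj_on_def] that by blast
        qed
        show ?thesis
        proof (rule equals0I)
          fix x assume "x \<in> \<sigma> ` {..<j} \<inter> \<sigma> ` {j..<n}"
          then obtain a b where "a < j" "j \<le> b" "b < n" "x = \<sigma> a" "x = \<sigma> b" by auto
          then show False using ab[of a b] by simp
        qed
      qed
      ultimately show ?thesis by blast
    qed
    have "s \<le> (\<Sum>i\<in>\<sigma> ` {j..<n}. d i) + real (dim (span (\<Union>i\<in>{..<n} - \<sigma> ` {j..<n}. V i)))"
      using hyp I by blast
    also have "(\<Sum>i\<in>\<sigma> ` {j..<n}. d i) = (\<Sum>l\<in>{j..<n}. d (\<sigma> l))"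
      using inj2 by (simp add: sum.reindex)
    also have "(\<Union>i\<in>{..<n} - \<sigma> ` {j..<n}. V i) = (\<Union>l<j. V (\<sigma> l))"
      unfolding compl by simp
    finally show ?thesis using dimB[OF that] by (simp add: c_def)
  qed
  have cn: "s \<le> c n" using hypj[of n] by simp
  define q where "q = (LEAST j. s \<le> c j)"
  have q_le: "q \<le> n" unfolding q_def using cn by (rule Least_le)
  have cq: "s \<le> c q" unfolding q_def using cn by (rule LeastI)
  have below: "c j < s" if "j < q" for j using not_less_Least[OF that[unfolded q_def]] by (simp add: q_def not_le)
  define J where "J k = (\<Union>j\<in>{j. j < q \<and> \<sigma> j = k}. B (Suc j) - B j)" for k
  define i where "i = \<sigma> (q - 1)"
  have i_lt: "i < n" unfolding i_def using q_le n_pos by (intro \<sigma>_lt) linarith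
  have Jsig: "J (\<sigma> j) = (if j < q then B (Suc j) - B j else {})" if "j < n" for j
  proof -
    have "{j'. j' < q \<and> \<sigma> j' = \<sigma> j} = (if j < q then {j} else {})"
      using \<sigma>_inj that q_le by (auto simp: inj_on_def)
    then show ?thesis unfolding J_def by auto
  qed
  have Jout: "J k = {}" if "n \<le> k" for k
  proof -
    have "{j. j < q \<and> \<sigma> j = k} = {}"
    proof (rule equals0I)
      fix j assume "j \<in> {j. j < q \<and> \<sigma> j = k}"
      then have "j < n" "\<sigma> j = k" using q_le by auto
      then show False using \<sigma>_lt[of j] that by simp
    qed
    then show ?thesis unfolding J_def by blast
  qed
  have Jsub: "J k \<subseteq> G k" if "k < n" for k
    unfolding J_def using Bstep by fastforce
  have Jfin: "finite (J k)" if "k < n" for k using Jsub[OF that] gen_fin that by (meson finite_subset)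
  have inj: "inj_on snd (Sigma {..<n} J)"
  proof (rule inj_onI, clarsimp)
    fix k k' v assume k: "k < n" "v \<in> J k" and k': "k' < n" "v \<in> J k'"
    from k obtain j where j: "j < q" "\<sigma> j = k" "v \<in> B (Suc j)" "v \<notin> B j" unfolding J_def by blast
    from k' obtain j' where j': "j' < q" "\<sigma> j' = k'" "v \<in> B (Suc j')" "v \<notin> B j'" unfolding J_def by blast
    have "j = j'"
    proof (rule ccontr)
      assume "j \<noteq> j'"
      then consider "Suc j \<le> j'" | "Suc j' \<le> j" by linarith
      then show False
      proof cases
        case 1 then show ?thesis using Bmono[OF 1] j j' by blast
      next
        case 2 then show ?thesis using Bmono[OF 2] j j' by blast
      qed
    qed
    then show "k = k'" using j j' by simp
  qed
  have img: "snd ` Sigma {..<n} J = B q"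
  proof
    show "snd ` Sigma {..<n} J \<subseteq> B q"
    proof clarsimp
      fix k v assume "k < n" "v \<in> J k"
      then obtain j where "j < q" "v \<in> B (Suc j)" unfolding J_def by blast
      then show "v \<in> B q" using Bmono[of "Suc j" q] by auto
    qed
    show "B q \<subseteq> snd ` Sigma {..<n} J"
    proof
      fix v assume "v \<in> B q"
      then obtain j where j: "j < q" "v \<in> B (Suc j) - B j" unfolding B_def using in_chain_diff by blast
      then have "v \<in> J (\<sigma> j)" unfolding J_def by blast
      moreover have "\<sigma> j < n" using j q_le by (intro \<sigma>_lt) simp
      ultimately show "v \<in> snd ` Sigma {..<n} J" by (intro image_eqI[of v snd "(\<sigma> j, v)"]) auto
    qed
  qed
  have sumcard: "(\<Sum>k<n. real (card (J k))) = c q"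
  proof -
    have "(\<Sum>k<n. card (J k)) = card (Sigma {..<n} J)" using Jfin by (simp add: card_SigmaI)
    also have "\<dots> = card (snd ` Sigma {..<n} J)" using inj by (simp add: card_image)
    finally show ?thesis unfolding img c_def by (metis of_nat_sum)
  qed
  have JJ: "J \<in> JJ n s G"
    unfolding JJ_def family_independent_def tuple_pairs_def
    using Jsub Jout inj img Bind sumcard cq by auto
  define R where "R j = min (c j) s" for j
  have Rmono: "R a \<le> R b" if "a \<le> b" for a b unfolding R_def using cmono[OF that] by simp
  have cardJ: "real (card (J (\<sigma> j))) = (if j < q then c (Suc j) - c j else 0)" if "j < n" for j
    using Jsig[OF that] Bmono[of j "Suc j"] Bfin by (simp add: c_def card_Diff_subset of_nat_diff card_mono)
  have key: "Jhat n s J i (\<sigma> j) = R (Suc j) - R j" if j: "j < n" for j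
  proof -
    have eqi: "(\<sigma> j = i) = (j = q - 1)"
      unfolding i_def using \<sigma>_inj j q_le n_pos by (auto simp: inj_on_def)
    have Jh: "Jhat n s J i (\<sigma> j) = real (card (J (\<sigma> j))) + (if j = q - 1 then s - c q else 0)"
      unfolding Jhat_def sumcard eqi by simp
    consider "Suc j = q" | "Suc j < q" | "q \<le> j" by linarith
    then show ?thesis
    proof cases
      case 1
      then show ?thesis using Jh cardJ[OF j] below[of j] cq by (auto simp: R_def)
    next
      case 2
      then show ?thesis using Jh cardJ[OF j] below[of j] below[of "Suc j"] by (auto simp: R_def)
    next
      case 3
      have cj: "s \<le> c j" "s \<le> c (Suc j)" using cq cmono[OF 3] cmono[of q "Suc j"] 3 by auto
      show ?thesis
      proof (cases "j = q - 1")
        case True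
        then have "q = 0" using 3 by simp
        then have "s = 0" using cq c0 s_nonneg by simp
        moreover have "0 \<le> c j" "0 \<le> c (Suc j)" by (auto simp: c_def)
        ultimately show ?thesis using Jh cardJ[OF j] 3 \<open>q = 0\<close> c0 by (simp add: R_def)
      next
        case False
        then show ?thesis using Jh cardJ[OF j] 3 cj by (simp add: R_def)
      qed
    qed
  qed
  have nonneg: "\<forall>k<n. 0 \<le> Jhat n s J i k"
  proof (intro allI impI)
    fix k assume "k < n"
    then obtain j where "j < n" "k = \<sigma> j" using \<sigma>_img by (metis imageE lessThan_iff)
    then show "0 \<le> Jhat n s J i k" using key Rmono[of j "Suc j"] by simp
  qed
  have mem: "(J, i) \<in> JJbar n s G" unfolding JJbar_def using JJ i_lt nonneg by simp
  have Rn: "R n = s" using cn by (simp add: R_def)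
  have "(\<Sum>k<n. w k * (Jhat n s J i k - d k)) = (\<Sum>j<n. w (\<sigma> j) * (Jhat n s J i (\<sigma> j) - d (\<sigma> j)))"
    using sum.reindex_bij_betw[OF \<sigma>_bij, of "\<lambda>k. w k * (Jhat n s J i k - d k)"] by simp
  also have "\<dots> = (\<Sum>j<n. w (\<sigma> j) * (R (Suc j) - R j - d (\<sigma> j)))"
    using key by (intro sum.cong) auto
  also have "\<dots> \<le> 0"
  proof (rule abel)
    show "\<forall>j<n. 0 \<le> w (\<sigma> j)" using w \<sigma>_lt by simp
    show "\<forall>i j. i \<le> j \<longrightarrow> j < n \<longrightarrow> w (\<sigma> i) \<le> w (\<sigma> j)" using \<sigma>_mono by blast
    show "\<forall>j\<le>n. (\<Sum>l = j..<n. R (Suc l) - R l - d (\<sigma> l)) \<le> 0"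
    proof (intro allI impI)
      fix j assume j: "j \<le> n"
      have "(\<Sum>l = j..<n. R (Suc l) - R l - d (\<sigma> l)) = (R n - R j) - (\<Sum>l = j..<n. d (\<sigma> l))"
        using sum_Suc_diff'[OF j, of R] by (simp add: sum_subtractf)
      also have "\<dots> \<le> 0"
      proof -
        have D0: "0 \<le> (\<Sum>l = j..<n. d (\<sigma> l))" using d_nonneg \<sigma>_lt by (intro sum_nonneg) auto
        have "s - R j \<le> (\<Sum>l = j..<n. d (\<sigma> l))"
          using hypj[OF j] D0 by (auto simp: R_def min_def)
        then show ?thesis using Rn by simp
      qed
      finally show "(\<Sum>l = j..<n. R (Suc l) - R l - d (\<sigma> l)) \<le> 0" .
    qed
  qed
  finally show ?thesis using mem by force
qed


lemma imgsum:
  fixes h :: "'a \<Rightarrow> 'b" and u F :: "'b \<Rightarrow> real"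
  assumes "finite A"
  shows "(\<Sum>p\<in>A. u (h p) / real (card {q\<in>A. h q = h p}) * F (h p)) = (\<Sum>y\<in>h ` A. u y * F y)"
proof -
  have "(\<Sum>p\<in>A. u (h p) / real (card {q\<in>A. h q = h p}) * F (h p))
      = (\<Sum>y\<in>h ` A. \<Sum>p\<in>{x\<in>A. h x = y}. u (h p) / real (card {q\<in>A. h q = h p}) * F (h p))"
    using assms by (rule sum.image_gen)
  also have "\<dots> = (\<Sum>y\<in>h ` A. u y * F y)"
  proof (rule sum.cong[OF refl])
    fix y assume y: "y \<in> h ` A"
    have ne: "card {x\<in>A. h x = y} \<noteq> 0" using y assms by auto
    have "(\<Sum>p\<in>{x\<in>A. h x = y}. u (h p) / real (card {q\<in>A. h q = h p}) * F (h p))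
        = (\<Sum>p\<in>{x\<in>A. h x = y}. u y / real (card {q\<in>A. h q = y}) * F y)"
      by (rule sum.cong) auto
    also have "\<dots> = u y * F y" using ne by simp
    finally show "(\<Sum>p\<in>{x\<in>A. h x = y}. u (h p) / real (card {q\<in>A. h q = h p}) * F (h p)) = u y * F y" .
  qed
  finally show ?thesis .
qed

lemma JJbar_finite:
  assumes gen_fin: "\<forall>i<n. finite (G i)"
  shows "finite (JJbar n s G)"
proof -
  let ?F = "(\<lambda>f k. if k < n then f k else {}) ` (PiE {..<n} (\<lambda>k. Pow (G k)))"
  have "finite ?F" using gen_fin by (intro finite_imageI finite_PiE) auto
  moreover have "JJbar n s G \<subseteq> ?F \<times> {..<n}"
  proof clarify
    fix J i assume "(J, i) \<in> JJbar n s G"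
    then have J: "\<forall>k<n. J k \<subseteq> G k" "\<forall>k\<ge>n. J k = {}" "i < n"
      unfolding JJbar_def JJ_def by auto
    have "J = (\<lambda>k. if k < n then restrict J {..<n} k else {})" using J by (auto simp: fun_eq_iff)
    moreover have "restrict J {..<n} \<in> PiE {..<n} (\<lambda>k. Pow (G k))" using J by auto
    ultimately show "J \<in> ?F \<and> i \<in> {..<n}" using J(3) by blast
  qed
  ultimately have "finite (?F \<times> {..<n})" by simp
  then show ?thesis using \<open>JJbar n s G \<subseteq> ?F \<times> {..<n}\<close> by (rule finite_subset[rotated])
qed

theorem lemma1:
  fixes n :: nat and s :: real and d :: "nat \<Rightarrow> real"
    and V G :: "nat \<Rightarrow> 'v::euclidean_space set"
  assumes n_pos: "n \<ge> 1"
    and s_nonneg: "s \<ge> 0"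
    and d_nonneg: "\<forall>i<n. d i \<ge> 0"
    and subsp: "\<forall>i<n. subspace (V i)"
    and gen_fin: "\<forall>i<n. finite (G i)"
    and gen_span: "\<forall>i<n. span (G i) = V i"
    and hyp: "\<forall>I. I \<subseteq> {..<n} \<longrightarrow>
               (\<Sum>i\<in>I. d i) + real (dim (span (\<Union>i\<in>{..<n} - I. V i))) \<ge> s"
  shows "\<exists>\<alpha> :: ((nat \<Rightarrow> 'v set) \<times> nat) \<Rightarrow> real.
           (\<forall>p\<in>JJbar n s G. \<alpha> p \<ge> 0) \<and>
           (\<Sum>p\<in>JJbar n s G. \<alpha> p) = 1 \<and>
           (\<forall>k<n. (\<Sum>p\<in>JJbar n s G. \<alpha> p * Jhat n s (fst p) (snd p) k) \<le> d k)"
proof -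
  let ?A = "JJbar n s G"
  have finA: "finite ?A" using gen_fin by (rule JJbar_finite)
  define h where "h p = (\<lambda>k. Jhat n s (fst p) (snd p) k - d k)" for p :: "(nat \<Rightarrow> 'v set) \<times> nat"
  define P where "P = h ` ?A"
  have finP: "finite P" unfolding P_def using finA by simp
  have fh: "\<forall>w. (\<forall>k<n. 0 \<le> w k) \<longrightarrow> (\<exists>p\<in>P. (\<Sum>k<n. w k * p k) \<le> 0)"
  proof (intro allI impI)
    fix w :: "nat \<Rightarrow> real" assume w: "\<forall>k<n. 0 \<le> w k"
    obtain p where "p \<in> ?A" "(\<Sum>k<n. w k * (Jhat n s (fst p) (snd p) k - d k)) \<le> 0"
      using greedy[OF n_pos s_nonneg d_nonneg gen_fin gen_span hyp w] by blast
    then show "\<exists>p\<in>P. (\<Sum>k<n. w k * p k) \<le> 0" unfolding P_def h_def by force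
  qed
  obtain c where c: "c \<in> Conv P" "\<forall>k<n. c k \<le> 0" using farkas[OF finP fh] by blast
  obtain u where u: "\<forall>y\<in>P. 0 \<le> u y" "sum u P = 1" "c = (\<lambda>k. \<Sum>y\<in>P. u y * y k)"
    using c(1) unfolding Conv_def by blast
  define \<alpha> where "\<alpha> p = u (h p) / real (card {q\<in>?A. h q = h p})" for p
  have a0: "\<forall>p\<in>?A. \<alpha> p \<ge> 0" using u(1) unfolding \<alpha>_def P_def by auto
  have a1: "(\<Sum>p\<in>?A. \<alpha> p) = 1"
    using imgsum[OF finA, of u h "\<lambda>_. 1"] u(2) unfolding \<alpha>_def P_def by simp
  have a2: "(\<Sum>p\<in>?A. \<alpha> p * Jhat n s (fst p) (snd p) k) \<le> d k" if k: "k < n" for k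
  proof -
    have "(\<Sum>p\<in>?A. \<alpha> p * Jhat n s (fst p) (snd p) k) = (\<Sum>p\<in>?A. \<alpha> p * h p k + \<alpha> p * d k)"
      by (rule sum.cong) (auto simp: h_def algebra_simps)
    also have "\<dots> = (\<Sum>p\<in>?A. \<alpha> p * h p k) + (\<Sum>p\<in>?A. \<alpha> p) * d k"
      by (simp add: sum.distrib sum_distrib_right)
    also have "(\<Sum>p\<in>?A. \<alpha> p * h p k) = c k"
      using imgsum[OF finA, of u h "\<lambda>y. y k"] u(3) unfolding \<alpha>_def P_def by simp
    finally show ?thesis using a1 c(2) k by simp
  qed
  show ?thesis using a0 a1 a2 by blast
qed

end
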